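(* Let $P \subseteq \mathbb{R}^7$ be an associative $3$-plane, and let $\Theta(P) = \Lambda^2(P) \oplus \Psi(P)$. Then $\Theta(P)$ is a Lie subalgebra of $\mathfrak{so}(7) = \Lambda^2(\mathbb{R}^7)$ isomorphic to $\mathfrak{so}(4)$, and the direct sum $\Lambda^2(P) \oplus \Psi(P)$ is orthogonal. Also $\Theta(P)$ is the (non-orthogonal) direct sum $\Theta(P) = \Lambda^2(P) \oplus (P \lrcorner \varphi)$. Finally, if $P, Q$ are distinct associative $3$-planes, then $\Theta(P) \cap \Theta(Q)$ is the Lie subalgebra - $\Theta(P) \cap \Theta(Q) = \{0\}$ if $P \cap Q = \{0\}$; - $\Theta(P) \cap \Theta(Q) = \mathrm{Span}\{ v \lrcorner \varphi \} \cong \mathfrak{so}(2)$ if $P \cap Q$ is $1$-dimensional with orthonormal basis $\{v\}$.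
   Context: Equip $\mathbb{R}^7$ with its standard inner product, orientation and basis $e_1,\dots,e_7$. Let $\varphi = e_{123} - e_{167} - e_{527} - e_{563} - e_{415} - e_{426} - e_{437}$ ($e_{ijk} = e_i\wedge e_j\wedge e_k$) and $\psi = \star\varphi = e_{4567} - e_{4523} - e_{4163} - e_{4127} - e_{2637} - e_{1537} - e_{1526}$. The cross product is defined by $\langle u \times v, w\rangle = \varphi(u,v,w)$; a $3$-dimensional subspace is associative if it is closed under $\times$. A skew bilinear form $X$ is identified with the skew-adjoint operator $X$ given by $X(u,v) = \langle X(u), v\rangle$, so $\Lambda^2(\mathbb{R}^7) = \mathfrak{so}(7)$ with Lie bracket the commutator of operators. Inner product on $\Lambda^2$: $\langle X, Y\rangle = \sum_{i,j} X(e_i,e_j)Y(e_i,e_j)$. For $u,v \in \mathbb{R}^7$: $u \wedge v$ is the 2-form $(a,b) \mapsto \langle u,a\rangle\langle v,b\rangle - \langle u,b\rangle\langle v,a\rangle$; $u \lrcorner \varphi$ is the 2-form $(a,b) \mapsto \varphi(u,a,b)$; $\Psi_{uv}$ is the 2-form $(a,b) \mapsto \psi(u,v,a,b)$. For a subspace $V$: $\Lambda^2(V) = \mathrm{Span}\{u\wedge v : u,v \in V\}$, $V \lrcorner \varphi = \{ v \lrcorner \varphi : v \in V\}$, and $\Psi(V) = \mathrm{Span}\{\Psi_{uv} : u, v \in V\}$. *)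

theory Defs
  imports "HOL-Analysis.Analysis"
begin

text \<open>R^7 is real^7; the basis vector e_k (k = 1..7) is axis (of_nat k) 1,
  i.e. the component index of_nat k :: 7 (note of_nat 7 = 0 in type 7, so the
  seven indices are distinct).\<close>

type_synonym R7 = "real^7"

definition co :: "R7 \<Rightarrow> nat \<Rightarrow> real" where
  "co u i = u $ (of_nat i :: 7)"

definition ebasis :: "nat \<Rightarrow> R7" where
  "ebasis i = axis (of_nat i :: 7) 1"

definition e3 :: "nat \<Rightarrow> nat \<Rightarrow> nat \<Rightarrow> R7 \<Rightarrow> R7 \<Rightarrow> R7 \<Rightarrow> real" where
  "e3 i j k u v w =
     co u i * (co v j * co w k - co v k * co w j)
   - co u j * (co v i * co w k - co v k * co w i)
   + co u k * (co v i * co w j - co v j * co w i)"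

definition e4 :: "nat \<Rightarrow> nat \<Rightarrow> nat \<Rightarrow> nat \<Rightarrow> R7 \<Rightarrow> R7 \<Rightarrow> R7 \<Rightarrow> R7 \<Rightarrow> real" where
  "e4 i j k l a b c d =
     co a i * e3 j k l b c d - co a j * e3 i k l b c d
   + co a k * e3 i j l b c d - co a l * e3 i j k b c d"

definition phi :: "R7 \<Rightarrow> R7 \<Rightarrow> R7 \<Rightarrow> real" where
  "phi u v w = e3 1 2 3 u v w - e3 1 6 7 u v w - e3 5 2 7 u v w - e3 5 6 3 u v w
     - e3 4 1 5 u v w - e3 4 2 6 u v w - e3 4 3 7 u v w"

definition psi :: "R7 \<Rightarrow> R7 \<Rightarrow> R7 \<Rightarrow> R7 \<Rightarrow> real" where
  "psi a b c d = e4 4 5 6 7 a b c d - e4 4 5 2 3 a b c d - e4 4 1 6 3 a b c d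
     - e4 4 1 2 7 a b c d - e4 2 6 3 7 a b c d - e4 1 5 3 7 a b c d - e4 1 5 2 6 a b c d"

definition cross7 :: "R7 \<Rightarrow> R7 \<Rightarrow> R7" where
  "cross7 u v = (\<chi> k. phi u v (axis k 1))"

definition associative :: "R7 set \<Rightarrow> bool" where
  "associative P \<longleftrightarrow> subspace P \<and> dim P = 3 \<and> (\<forall>u\<in>P. \<forall>v\<in>P. cross7 u v \<in> P)"

text \<open>A bilinear form B is identified with the operator X with B(u,v) = <X u, v>,
  i.e. the matrix with X $ j $ i = B(e_i, e_j).  2-forms are thus elements of real^7^7.\<close>
definition op_of_form :: "(R7 \<Rightarrow> R7 \<Rightarrow> real) \<Rightarrow> real^7^7" where
  "op_of_form B = (\<chi> j i. B (axis i 1) (axis j 1))"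

definition wedge :: "R7 \<Rightarrow> R7 \<Rightarrow> real^7^7" where
  "wedge u v = op_of_form (\<lambda>a b. (u \<bullet> a) * (v \<bullet> b) - (u \<bullet> b) * (v \<bullet> a))"

definition hook :: "R7 \<Rightarrow> real^7^7" where
  "hook u = op_of_form (\<lambda>a b. phi u a b)"

definition PsiF :: "R7 \<Rightarrow> R7 \<Rightarrow> real^7^7" where
  "PsiF u v = op_of_form (\<lambda>a b. psi u v a b)"

definition Lambda2 :: "R7 set \<Rightarrow> (real^7^7) set" where
  "Lambda2 V = span {wedge u v | u v. u \<in> V \<and> v \<in> V}"

definition hookset :: "R7 set \<Rightarrow> (real^7^7) set" where
  "hookset V = {hook v | v. v \<in> V}"

definition PsiS :: "R7 set \<Rightarrow> (real^7^7) set" where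
  "PsiS V = span {PsiF u v | u v. u \<in> V \<and> v \<in> V}"

definition form_inner :: "real^7^7 \<Rightarrow> real^7^7 \<Rightarrow> real" where
  "form_inner X Y = (\<Sum>i\<in>UNIV. \<Sum>j\<in>UNIV. ((X *v axis i 1) \<bullet> axis j 1) * ((Y *v axis i 1) \<bullet> axis j 1))"

definition bracket :: "real^'n^'n \<Rightarrow> real^'n^'n \<Rightarrow> real^'n^'n" where
  "bracket X Y = X ** Y - Y ** X"

definition setsum :: "'a::ab_group_add set \<Rightarrow> 'a set \<Rightarrow> 'a set" where
  "setsum A B = {x + y | x y. x \<in> A \<and> y \<in> B}"

definition Theta :: "R7 set \<Rightarrow> (real^7^7) set" where
  "Theta P = setsum (Lambda2 P) (PsiS P)"

definition lie_subalgebra :: "(real^'n^'n) set \<Rightarrow> bool" where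
  "lie_subalgebra A \<longleftrightarrow> subspace A \<and> (\<forall>X\<in>A. \<forall>Y\<in>A. bracket X Y \<in> A)"

definition so :: "(real^'n^'n) set" where
  "so = {A. transpose A = - A}"

definition lie_isomorphic :: "(real^'n^'n) set \<Rightarrow> (real^'m^'m) set \<Rightarrow> bool" where
  "lie_isomorphic A B \<longleftrightarrow> (\<exists>f. linear f \<and> bij_betw f A B \<and>
      (\<forall>X\<in>A. \<forall>Y\<in>A. f (bracket X Y) = bracket (f X) (f Y)))"

end

theory Submission
  imports Defs
begin


lemma exhaust_7:
  fixes x :: 7
  shows "x = 0 \<or> x = 1 \<or> x = 2 \<or> x = 3 \<or> x = 4 \<or> x = 5 \<or> x = 6"
proof (induct x)
  case (of_int z)
  then have "z = 0 \<or> z = 1 \<or> z = 2 \<or> z = 3 \<or> z = 4 \<or> z = 5 \<or> z = 6" by fastforce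
  then show ?case by auto
qed

lemma UNIV_7: "(UNIV::7 set) = {0,1,2,3,4,5,6}" using exhaust_7 by auto

lemma sum_7: "sum f (UNIV::7 set) = f 0 + f 1 + f 2 + f 3 + f 4 + f 5 + f 6"
  unfolding UNIV_7 by (simp add: ac_simps)

lemma inner7: "(u::R7) \<bullet> v = u$0 * v$0 + u$1 * v$1 + u$2 * v$2 + u$3 * v$3 + u$4 * v$4 + u$5 * v$5 + u$6 * v$6"
  by (simp add: inner_vec_def sum_7)

lemma vec7_eq: "((x::R7) = y) \<longleftrightarrow> x$0 = y$0 \<and> x$1 = y$1 \<and> x$2 = y$2 \<and> x$3 = y$3 \<and> x$4 = y$4 \<and> x$5 = y$5 \<and> x$6 = y$6"
proof
  assume h: "x$0 = y$0 \<and> x$1 = y$1 \<and> x$2 = y$2 \<and> x$3 = y$3 \<and> x$4 = y$4 \<and> x$5 = y$5 \<and> x$6 = y$6"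
  show "x = y" unfolding vec_eq_iff
  proof
    fix i :: 7
    show "x $ i = y $ i" using exhaust_7[of i] h by auto
  qed
qed simp

lemma seven0: "(of_nat 7::7) = 0" "(7::7) = 0" by simp_all

definition chiv :: "R7 \<Rightarrow> R7 \<Rightarrow> R7 \<Rightarrow> R7" where
  "chiv u v w = (\<chi> l. psi u v w (axis l 1))"

lemma cross7_c:
  "cross7 u v $ 1 = u$2 * v$3 - u$3 * v$2 + u$4 * v$5 - u$5 * v$4 - u$6 * v$0 + u$0 * v$6"
  "cross7 u v $ 2 = - u$1 * v$3 + u$3 * v$1 + u$4 * v$6 + u$5 * v$0 - u$6 * v$4 - u$0 * v$5"
  "cross7 u v $ 3 = u$1 * v$2 - u$2 * v$1 + u$4 * v$0 - u$5 * v$6 + u$6 * v$5 - u$0 * v$4"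
  "cross7 u v $ 4 = - u$1 * v$5 - u$2 * v$6 - u$3 * v$0 + u$5 * v$1 + u$6 * v$2 + u$0 * v$3"
  "cross7 u v $ 5 = u$1 * v$4 - u$2 * v$0 + u$3 * v$6 - u$4 * v$1 - u$6 * v$3 + u$0 * v$2"
  "cross7 u v $ 6 = u$1 * v$0 + u$2 * v$4 - u$3 * v$5 - u$4 * v$2 + u$5 * v$3 - u$0 * v$1"
  "cross7 u v $ 0 = - u$1 * v$6 + u$2 * v$5 + u$3 * v$4 - u$4 * v$3 - u$5 * v$2 + u$6 * v$1"
  unfolding cross7_def phi_def e3_def co_def by (simp_all add: axis_def algebra_simps seven0)

lemma chiv_c:
  "chiv u v w $ 1 = u$2 * v$4 * w$0 - u$2 * v$5 * w$6 + u$2 * v$6 * w$5 - u$2 * v$0 * w$4 - u$3 * v$4 * w$6 - u$3 * v$5 * w$0 + u$3 * v$6 * w$4 + u$3 * v$0 * w$5 - u$4 * v$2 * w$0 + u$4 * v$3 * w$6 - u$4 * v$6 * w$3 + u$4 * v$0 * w$2 + u$5 * v$2 * w$6 + u$5 * v$3 * w$0 - u$5 * v$6 * w$2 - u$5 * v$0 * w$3 - u$6 * v$2 * w$5 - u$6 * v$3 * w$4 + u$6 * v$4 * w$3 + u$6 * v$5 * w$2 + u$0 * v$2 * w$4 - u$0 * v$3 * w$5 - u$0 * v$4 * w$2 + u$0 * v$5 * w$3"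
  "chiv u v w $ 2 = - u$1 * v$4 * w$0 + u$1 * v$5 * w$6 - u$1 * v$6 * w$5 + u$1 * v$0 * w$4 + u$3 * v$4 * w$5 - u$3 * v$5 * w$4 - u$3 * v$6 * w$0 + u$3 * v$0 * w$6 + u$4 * v$1 * w$0 - u$4 * v$3 * w$5 + u$4 * v$5 * w$3 - u$4 * v$0 * w$1 - u$5 * v$1 * w$6 + u$5 * v$3 * w$4 - u$5 * v$4 * w$3 + u$5 * v$6 * w$1 + u$6 * v$1 * w$5 + u$6 * v$3 * w$0 - u$6 * v$5 * w$1 - u$6 * v$0 * w$3 - u$0 * v$1 * w$4 - u$0 * v$3 * w$6 + u$0 * v$4 * w$1 + u$0 * v$6 * w$3"
  "chiv u v w $ 3 = u$1 * v$4 * w$6 + u$1 * v$5 * w$0 - u$1 * v$6 * w$4 - u$1 * v$0 * w$5 - u$2 * v$4 * w$5 + u$2 * v$5 * w$4 + u$2 * v$6 * w$0 - u$2 * v$0 * w$6 - u$4 * v$1 * w$6 + u$4 * v$2 * w$5 - u$4 * v$5 * w$2 + u$4 * v$6 * w$1 - u$5 * v$1 * w$0 - u$5 * v$2 * w$4 + u$5 * v$4 * w$2 + u$5 * v$0 * w$1 + u$6 * v$1 * w$4 - u$6 * v$2 * w$0 - u$6 * v$4 * w$1 + u$6 * v$0 * w$2 + u$0 * v$1 * w$5 + u$0 * v$2 * w$6 - u$0 * v$5 * w$1 - u$0 * v$6 * w$2"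
  "chiv u v w $ 4 = u$1 * v$2 * w$0 - u$1 * v$3 * w$6 + u$1 * v$6 * w$3 - u$1 * v$0 * w$2 - u$2 * v$1 * w$0 + u$2 * v$3 * w$5 - u$2 * v$5 * w$3 + u$2 * v$0 * w$1 + u$3 * v$1 * w$6 - u$3 * v$2 * w$5 + u$3 * v$5 * w$2 - u$3 * v$6 * w$1 + u$5 * v$2 * w$3 - u$5 * v$3 * w$2 - u$5 * v$6 * w$0 + u$5 * v$0 * w$6 - u$6 * v$1 * w$3 + u$6 * v$3 * w$1 + u$6 * v$5 * w$0 - u$6 * v$0 * w$5 + u$0 * v$1 * w$2 - u$0 * v$2 * w$1 - u$0 * v$5 * w$6 + u$0 * v$6 * w$5"
  "chiv u v w $ 5 = - u$1 * v$2 * w$6 - u$1 * v$3 * w$0 + u$1 * v$6 * w$2 + u$1 * v$0 * w$3 + u$2 * v$1 * w$6 - u$2 * v$3 * w$4 + u$2 * v$4 * w$3 - u$2 * v$6 * w$1 + u$3 * v$1 * w$0 + u$3 * v$2 * w$4 - u$3 * v$4 * w$2 - u$3 * v$0 * w$1 - u$4 * v$2 * w$3 + u$4 * v$3 * w$2 + u$4 * v$6 * w$0 - u$4 * v$0 * w$6 - u$6 * v$1 * w$2 + u$6 * v$2 * w$1 - u$6 * v$4 * w$0 + u$6 * v$0 * w$4 - u$0 * v$1 * w$3 + u$0 * v$3 * w$1 + u$0 * v$4 * w$6 - u$0 * v$6 * w$4"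
  "chiv u v w $ 6 = u$1 * v$2 * w$5 + u$1 * v$3 * w$4 - u$1 * v$4 * w$3 - u$1 * v$5 * w$2 - u$2 * v$1 * w$5 - u$2 * v$3 * w$0 + u$2 * v$5 * w$1 + u$2 * v$0 * w$3 - u$3 * v$1 * w$4 + u$3 * v$2 * w$0 + u$3 * v$4 * w$1 - u$3 * v$0 * w$2 + u$4 * v$1 * w$3 - u$4 * v$3 * w$1 - u$4 * v$5 * w$0 + u$4 * v$0 * w$5 + u$5 * v$1 * w$2 - u$5 * v$2 * w$1 + u$5 * v$4 * w$0 - u$5 * v$0 * w$4 - u$0 * v$2 * w$3 + u$0 * v$3 * w$2 - u$0 * v$4 * w$5 + u$0 * v$5 * w$4"
  "chiv u v w $ 0 = - u$1 * v$2 * w$4 + u$1 * v$3 * w$5 + u$1 * v$4 * w$2 - u$1 * v$5 * w$3 + u$2 * v$1 * w$4 + u$2 * v$3 * w$6 - u$2 * v$4 * w$1 - u$2 * v$6 * w$3 - u$3 * v$1 * w$5 - u$3 * v$2 * w$6 + u$3 * v$5 * w$1 + u$3 * v$6 * w$2 - u$4 * v$1 * w$2 + u$4 * v$2 * w$1 + u$4 * v$5 * w$6 - u$4 * v$6 * w$5 + u$5 * v$1 * w$3 - u$5 * v$3 * w$1 - u$5 * v$4 * w$6 + u$5 * v$6 * w$4 + u$6 * v$2 * w$3 - u$6 * v$3 * w$2 + u$6 * v$4 * w$5 - u$6 * v$5 * w$4"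
  unfolding chiv_def psi_def e4_def e3_def co_def by (simp_all add: axis_def algebra_simps seven0)

lemma phi_eq: "phi a b c = cross7 a b \<bullet> c"
  unfolding phi_def e3_def co_def inner7 cross7_c by (simp add: seven0 algebra_simps)

lemma cross7_add_left: "cross7 (a + b) c = cross7 a c + cross7 b c"
  unfolding vec7_eq by (simp add: cross7_c algebra_simps)
lemma cross7_add_right: "cross7 c (a + b) = cross7 c a + cross7 c b"
  unfolding vec7_eq by (simp add: cross7_c algebra_simps)
lemma cross7_diff_left: "cross7 (a - b) c = cross7 a c - cross7 b c"
  unfolding vec7_eq by (simp add: cross7_c algebra_simps)
lemma cross7_diff_right: "cross7 c (a - b) = cross7 c a - cross7 c b"
  unfolding vec7_eq by (simp add: cross7_c algebra_simps)
lemma cross7_scale_left: "cross7 (r *\<^sub>R a) c = r *\<^sub>R cross7 a c"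
  unfolding vec7_eq by (simp add: cross7_c algebra_simps)
lemma cross7_scale_right: "cross7 c (r *\<^sub>R a) = r *\<^sub>R cross7 c a"
  unfolding vec7_eq by (simp add: cross7_c algebra_simps)
lemma cross7_minus_left: "cross7 (- a) c = - cross7 a c"
  unfolding vec7_eq by (simp add: cross7_c algebra_simps)
lemma cross7_minus_right: "cross7 c (- a) = - cross7 c a"
  unfolding vec7_eq by (simp add: cross7_c algebra_simps)
lemma cross7_zero_left[simp]: "cross7 0 c = 0"
  unfolding vec7_eq by (simp add: cross7_c)
lemma cross7_zero_right[simp]: "cross7 c 0 = 0"
  unfolding vec7_eq by (simp add: cross7_c)
lemma cross7_anti: "cross7 a b = - cross7 b a"
  unfolding vec7_eq by (simp add: cross7_c algebra_simps)
lemma cross7_self[simp]: "cross7 a a = 0"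
  unfolding vec7_eq by (simp add: cross7_c algebra_simps)
lemma triple: "cross7 a b \<bullet> c = a \<bullet> cross7 b c"
  unfolding inner7 cross7_c by (simp add: algebra_simps)
lemma cross7_orth1[simp]: "cross7 a b \<bullet> a = 0"
  unfolding inner7 cross7_c by (simp add: algebra_simps)
lemma cross7_orth2[simp]: "cross7 a b \<bullet> b = 0"
  unfolding inner7 cross7_c by (simp add: algebra_simps)
lemma cross7_orth1'[simp]: "a \<bullet> cross7 a b = 0"
  by (metis cross7_orth1 inner_commute)
lemma cross7_orth2'[simp]: "b \<bullet> cross7 a b = 0"
  by (metis cross7_orth2 inner_commute)

lemmas cross7_lin = cross7_add_left cross7_add_right cross7_diff_left cross7_diff_right
  cross7_scale_left cross7_scale_right cross7_minus_left cross7_minus_right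

lemma idF: "cross7 u (cross7 v a) + cross7 (cross7 u v) a = (2*(u \<bullet> a)) *\<^sub>R v - (v \<bullet> a) *\<^sub>R u - (u \<bullet> v) *\<^sub>R a"
  unfolding vec7_eq by (simp add: cross7_c inner7 algebra_simps)
lemma idB: "cross7 u (cross7 v w) + cross7 v (cross7 u w) = (-2*(u \<bullet> v)) *\<^sub>R w + (u \<bullet> w) *\<^sub>R v + (v \<bullet> w) *\<^sub>R u"
  unfolding vec7_eq by (simp add: cross7_c inner7 algebra_simps)
lemma idC: "chiv u v w = cross7 u (cross7 v w) + (u \<bullet> v) *\<^sub>R w - (u \<bullet> w) *\<^sub>R v"
  unfolding vec7_eq by (simp add: cross7_c chiv_c inner7 algebra_simps)

lemma cross_cross_self: "cross7 a (cross7 a b) = (a \<bullet> b) *\<^sub>R a - (a \<bullet> a) *\<^sub>R b"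
  unfolding vec7_eq by (simp add: cross7_c inner7 algebra_simps)

lemma lagrange: "cross7 a b \<bullet> cross7 a b = (a \<bullet> a) * (b \<bullet> b) - (a \<bullet> b)^2"
proof -
  have "cross7 a b \<bullet> cross7 a b = - (cross7 b a \<bullet> cross7 a b)"
    by (metis cross7_anti inner_minus_left)
  also have "\<dots> = - (b \<bullet> cross7 a (cross7 a b))" by (simp add: triple)
  also have "\<dots> = (a \<bullet> a) * (b \<bullet> b) - (a \<bullet> b)^2"
    by (simp add: cross_cross_self inner_commute power2_eq_square algebra_simps)
  finally show ?thesis .
qed


lemma chiv_add1: "chiv (a + b) c d = chiv a c d + chiv b c d"
  by (simp add: idC cross7_lin inner_add_left algebra_simps)
lemma chiv_add2: "chiv a (b + c) d = chiv a b d + chiv a c d"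
  by (simp add: idC cross7_lin inner_add_left inner_add_right algebra_simps)
lemma chiv_add3: "chiv a b (c + d) = chiv a b c + chiv a b d"
  by (simp add: idC cross7_lin inner_add_left inner_add_right algebra_simps)
lemma chiv_scale1: "chiv (r *\<^sub>R a) c d = r *\<^sub>R chiv a c d"
  by (simp add: idC cross7_lin algebra_simps)
lemma chiv_scale2: "chiv a (r *\<^sub>R c) d = r *\<^sub>R chiv a c d"
  by (simp add: idC cross7_lin algebra_simps)
lemma chiv_scale3: "chiv a c (r *\<^sub>R d) = r *\<^sub>R chiv a c d"
  by (simp add: idC cross7_lin algebra_simps)

lemma op_apply:
  assumes "\<And>j. linear (\<lambda>a. B a (axis j 1))"
  shows "op_of_form B *v x = (\<chi> j. B x (axis j 1))"
proof -
  have "(op_of_form B *v x) $ j = B x (axis j 1)" for j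
  proof -
    have "(op_of_form B *v x) $ j = (\<Sum>i\<in>UNIV. B (axis i 1) (axis j 1) * x $ i)"
      by (simp add: matrix_vector_mult_def op_of_form_def)
    also have "\<dots> = (\<Sum>i\<in>UNIV. x $ i *\<^sub>R B (axis i 1) (axis j 1))"
      by (simp add: mult.commute)
    also have "\<dots> = B (\<Sum>i\<in>UNIV. x $ i *\<^sub>R axis i 1) (axis j 1)"
      using linear_sum[OF assms[of j], of "\<lambda>i. x $ i *\<^sub>R axis i 1" UNIV]
        linear_scale[OF assms[of j]] by simp
    also have "(\<Sum>i\<in>UNIV. x $ i *\<^sub>R axis i 1) = x"
      using basis_expansion[of x] by (simp add: scalar_mult_eq_scaleR)
    finally show ?thesis .
  qed
  then show ?thesis by (simp add: vec_eq_iff)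
qed

lemma op_apply_vec:
  assumes "linear F"
  shows "op_of_form (\<lambda>a b. F a \<bullet> b) *v x = F x"
proof -
  have "linear (\<lambda>a. F a \<bullet> axis j 1)" for j
    by (rule linearI) (simp_all add: linear_add[OF assms] linear_scale[OF assms] inner_add_left)
  then have "op_of_form (\<lambda>a b. F a \<bullet> b) *v x = (\<chi> j. F x \<bullet> axis j 1)"
    by (rule op_apply)
  also have "\<dots> = F x" by (simp add: vec_eq_iff inner_axis)
  finally show ?thesis .
qed

lemma hook_apply: "hook u *v x = cross7 u x"
proof -
  have "linear (\<lambda>a. phi u a (axis j 1))" for j
    by (rule linearI) (simp_all add: phi_eq cross7_lin inner_add_left)
  then have "hook u *v x = (\<chi> j. phi u x (axis j 1))"
    unfolding hook_def by (rule op_apply)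
  then show ?thesis by (simp add: cross7_def)
qed

lemma PsiF_apply: "PsiF u v *v x = chiv u v x"
proof -
  have "linear (\<lambda>a. psi u v a (axis j 1))" for j
  proof -
    have e: "psi u v a (axis j 1) = chiv u v a $ j" for a by (simp add: chiv_def)
    show ?thesis unfolding e
      by (rule linearI) (simp_all add: chiv_add3 chiv_scale3)
  qed
  then have "PsiF u v *v x = (\<chi> j. psi u v x (axis j 1))"
    unfolding PsiF_def by (rule op_apply)
  then show ?thesis by (simp add: chiv_def)
qed

lemma wedge_apply: "wedge u v *v x = (u \<bullet> x) *\<^sub>R v - (v \<bullet> x) *\<^sub>R u"
proof -
  have "linear (\<lambda>a. (u \<bullet> a) * (v \<bullet> axis j 1) - (u \<bullet> axis j 1) * (v \<bullet> a))" for j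
    by (rule linearI) (simp_all add: inner_add_right algebra_simps)
  then have "wedge u v *v x = (\<chi> j. (u \<bullet> x) * (v \<bullet> axis j 1) - (u \<bullet> axis j 1) * (v \<bullet> x))"
    unfolding wedge_def by (rule op_apply)
  then show ?thesis by (simp add: vec_eq_iff inner_axis mult.commute)
qed

lemma bracket_apply: "bracket X Y *v a = X *v (Y *v a) - Y *v (X *v a)"
  for X Y :: "real^'n^'n"
  by (simp add: bracket_def matrix_vector_mult_diff_rdistrib matrix_vector_mul_assoc)

lemma form_inner_alt: "form_inner X Y = (\<Sum>i\<in>UNIV. (X *v axis i 1) \<bullet> (Y *v axis i 1))"
  unfolding form_inner_def inner_axis by (simp add: inner_vec_def inner_real_def)

lemma lagrange2: "cross7 a c \<bullet> cross7 b c = (a \<bullet> b) * (c \<bullet> c) - (a \<bullet> c) * (b \<bullet> c)"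
proof -
  have "cross7 a c \<bullet> cross7 b c = a \<bullet> cross7 c (cross7 b c)" by (simp add: triple)
  also have "cross7 c (cross7 b c) = - cross7 c (cross7 c b)" by (metis cross7_anti cross7_minus_right)
  finally show ?thesis by (simp add: cross_cross_self inner_commute algebra_simps)
qed


locale aplane =
  fixes P :: "R7 set" and u v :: R7
  assumes assoc: "associative P" and uP: "u \<in> P" and vP: "v \<in> P"
    and uu: "u \<bullet> u = 1" and vv: "v \<bullet> v = 1" and uv: "u \<bullet> v = 0"
begin

definition "w = cross7 u v"

lemma subP: "subspace P" using assoc unfolding associative_def by auto
lemma dimP: "dim P = 3" using assoc unfolding associative_def by auto
lemma closP: "a \<in> P \<Longrightarrow> b \<in> P \<Longrightarrow> cross7 a b \<in> P" using assoc unfolding associative_def by auto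
lemma wP: "w \<in> P" unfolding w_def using closP uP vP by auto

lemma vu: "v \<bullet> u = 0" using uv by (simp add: inner_commute)
lemma ww: "w \<bullet> w = 1" unfolding w_def lagrange using uu vv uv by simp
lemma uw: "u \<bullet> w = 0" unfolding w_def by simp
lemma vw: "v \<bullet> w = 0" unfolding w_def by simp
lemma wu: "w \<bullet> u = 0" unfolding w_def by simp
lemma wv: "w \<bullet> v = 0" unfolding w_def by simp

lemmas inn = uu vv ww uv vu uw wu vw wv

lemma t_uv: "cross7 u v = w" by (simp add: w_def)
lemma t_vu: "cross7 v u = - w" by (metis cross7_anti w_def)
lemma t_vw: "cross7 v w = u"
proof -
  have "cross7 v w = - cross7 v (cross7 v u)" unfolding w_def by (metis cross7_anti cross7_minus_right)
  then show ?thesis by (simp add: cross_cross_self vu vv)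
qed
lemma t_wu: "cross7 w u = v"
proof -
  have "cross7 w u = - cross7 u (cross7 u v)" unfolding w_def by (metis cross7_anti)
  then show ?thesis by (simp add: cross_cross_self uv uu)
qed
lemma t_wv: "cross7 w v = - u" by (metis cross7_anti t_vw)
lemma t_uw: "cross7 u w = - v" by (metis cross7_anti t_wu)

lemmas tab = t_uv t_vu t_vw t_wu t_wv t_uw

lemma distinct_uvw: "u \<noteq> v" "u \<noteq> w" "v \<noteq> w" "u \<noteq> 0" "v \<noteq> 0" "w \<noteq> 0"
  using inn by auto

lemma P_span: "P = span {u, v, w}"
proof
  have ind: "independent {u, v, w}"
    by (rule pairwise_orthogonal_independent)
       (use inn distinct_uvw in \<open>auto simp: pairwise_def orthogonal_def\<close>)
  have "card {u, v, w} = 3" using distinct_uvw by simp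
  then show "P \<subseteq> span {u, v, w}"
    by (intro card_ge_dim_independent) (use ind uP vP wP dimP in auto)
  show "span {u, v, w} \<subseteq> P"
    by (rule span_minimal) (use uP vP wP subP in auto)
qed

definition "proj a = (a \<bullet> u) *\<^sub>R u + (a \<bullet> v) *\<^sub>R v + (a \<bullet> w) *\<^sub>R w"
definition "orth r \<longleftrightarrow> (\<forall>x\<in>P. r \<bullet> x = 0)"

lemma orth_iff: "orth r \<longleftrightarrow> r \<bullet> u = 0 \<and> r \<bullet> v = 0 \<and> r \<bullet> w = 0"
proof
  assume "orth r" then show "r \<bullet> u = 0 \<and> r \<bullet> v = 0 \<and> r \<bullet> w = 0"
    using uP vP wP unfolding orth_def by auto
next
  assume a: "r \<bullet> u = 0 \<and> r \<bullet> v = 0 \<and> r \<bullet> w = 0"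
  show "orth r" unfolding orth_def
  proof
    fix x assume "x \<in> P"
    then have "x \<in> span {u, v, w}" using P_span by simp
    then have "orthogonal r x"
      by (rule orthogonal_to_span) (use a in \<open>auto simp: orthogonal_def\<close>)
    then show "r \<bullet> x = 0" by (simp add: orthogonal_def)
  qed
qed

lemma proj_in: "proj a \<in> P"
  unfolding proj_def using subP uP vP wP
  by (intro subspace_add subspace_scale) auto

lemma orth_proj: "orth (a - proj a)"
  unfolding orth_iff proj_def by (simp add: inner_diff_left inner_add_left inn)

lemma P_orth_zero: "x \<in> P \<Longrightarrow> orth x \<Longrightarrow> x = 0"
  unfolding orth_def by auto

lemma proj_P: "p \<in> P \<Longrightarrow> proj p = p"
proof -
  assume p: "p \<in> P"
  have "p - proj p \<in> P" using p proj_in subP by (simp add: subspace_diff)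
  then have "p - proj p = 0" using orth_proj P_orth_zero by blast
  then show ?thesis by simp
qed

lemma expand: "p \<in> P \<Longrightarrow> p = (p \<bullet> u) *\<^sub>R u + (p \<bullet> v) *\<^sub>R v + (p \<bullet> w) *\<^sub>R w"
  using proj_P unfolding proj_def by simp

lemma proj_add: "proj (a + b) = proj a + proj b"
  unfolding proj_def by (simp add: inner_add_left algebra_simps)
lemma proj_diff: "proj (a - b) = proj a - proj b"
  unfolding proj_def by (simp add: inner_diff_left algebra_simps)
lemma proj_scale: "proj (c *\<^sub>R a) = c *\<^sub>R proj a"
  unfolding proj_def by (simp add: algebra_simps)
lemma proj_orth: "orth r \<Longrightarrow> proj r = 0"
  unfolding orth_iff proj_def by simp
lemma proj_decomp: "p \<in> P \<Longrightarrow> orth r \<Longrightarrow> proj (p + r) = p"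
  by (simp add: proj_add proj_P proj_orth)

lemma orth_inner: "orth r \<Longrightarrow> x \<in> P \<Longrightarrow> x \<bullet> r = 0"
  unfolding orth_def by (metis inner_commute)

lemma orth_cross: "p \<in> P \<Longrightarrow> orth r \<Longrightarrow> orth (cross7 p r)"
proof -
  assume p: "p \<in> P" and r: "orth r"
  show "orth (cross7 p r)" unfolding orth_def
  proof
    fix x assume x: "x \<in> P"
    have "cross7 p r \<bullet> x = - (cross7 r p \<bullet> x)" by (metis cross7_anti inner_minus_left)
    also have "\<dots> = - (r \<bullet> cross7 p x)" by (simp add: triple)
    also have "\<dots> = 0" using r closP[OF p x] unfolding orth_def by simp
    finally show "cross7 p r \<bullet> x = 0" .
  qed
qed

lemma chiv_basis:
  "x \<in> {u, v, w} \<Longrightarrow> y \<in> {u, v, w} \<Longrightarrow> c \<in> {u, v, w} \<Longrightarrow> chiv x y c = 0"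
  by (auto simp: idC tab inn cross7_lin)

lemma chiv_P:
  assumes a: "a \<in> P" and b: "b \<in> P" and c: "c \<in> P"
  shows "chiv a b c = 0"
proof -
  have "chiv a b c = chiv ((a \<bullet> u) *\<^sub>R u + (a \<bullet> v) *\<^sub>R v + (a \<bullet> w) *\<^sub>R w)
      ((b \<bullet> u) *\<^sub>R u + (b \<bullet> v) *\<^sub>R v + (b \<bullet> w) *\<^sub>R w)
      ((c \<bullet> u) *\<^sub>R u + (c \<bullet> v) *\<^sub>R v + (c \<bullet> w) *\<^sub>R w)"
    using expand[OF a] expand[OF b] expand[OF c] by simp
  also have "\<dots> = 0"
    by (simp add: chiv_add1 chiv_add2 chiv_add3 chiv_scale1 chiv_scale2 chiv_scale3 chiv_basis)
  finally show ?thesis .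
qed

lemma assocP: "a \<in> P \<Longrightarrow> b \<in> P \<Longrightarrow> c \<in> P \<Longrightarrow>
    cross7 a (cross7 b c) = (a \<bullet> c) *\<^sub>R b - (a \<bullet> b) *\<^sub>R c"
  using chiv_P[of a b c] unfolding idC by (simp add: algebra_simps)

lemma K4: "p \<in> P \<Longrightarrow> q \<in> P \<Longrightarrow> orth r \<Longrightarrow>
    cross7 p (cross7 q r) = - cross7 (cross7 p q) r - (p \<bullet> q) *\<^sub>R r"
proof -
  assume a: "p \<in> P" "q \<in> P" "orth r"
  have "cross7 p (cross7 q r) + cross7 (cross7 p q) r = - ((p \<bullet> q) *\<^sub>R r)"
    using idF[of p q r] orth_inner[of r p] orth_inner[of r q] a by simp
  then have e1: "cross7 p (cross7 q r) = - ((p \<bullet> q) *\<^sub>R r) - cross7 (cross7 p q) r"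
    by (simp add: eq_diff_eq)
  have e2: "- ((p \<bullet> q) *\<^sub>R r) - cross7 (cross7 p q) r = - cross7 (cross7 p q) r - (p \<bullet> q) *\<^sub>R r"
    by (simp add: algebra_simps)
  show ?thesis by (rule trans[OF e1 e2])
qed

lemma coords:
  assumes s: "s \<in> P" and s': "s' \<in> P"
  shows "cross7 s s' \<bullet> u = (s \<bullet> v) * (s' \<bullet> w) - (s \<bullet> w) * (s' \<bullet> v)"
    and "cross7 s s' \<bullet> v = (s \<bullet> w) * (s' \<bullet> u) - (s \<bullet> u) * (s' \<bullet> w)"
    and "cross7 s s' \<bullet> w = (s \<bullet> u) * (s' \<bullet> v) - (s \<bullet> v) * (s' \<bullet> u)"
proof -
  have e: "cross7 s s' = cross7 ((s \<bullet> u) *\<^sub>R u + (s \<bullet> v) *\<^sub>R v + (s \<bullet> w) *\<^sub>R w)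
      ((s' \<bullet> u) *\<^sub>R u + (s' \<bullet> v) *\<^sub>R v + (s' \<bullet> w) *\<^sub>R w)"
    using expand[OF s] expand[OF s'] by simp
  show "cross7 s s' \<bullet> u = (s \<bullet> v) * (s' \<bullet> w) - (s \<bullet> w) * (s' \<bullet> v)"
    unfolding e by (simp add: cross7_lin tab inn inner_add_left inner_diff_left algebra_simps)
  show "cross7 s s' \<bullet> v = (s \<bullet> w) * (s' \<bullet> u) - (s \<bullet> u) * (s' \<bullet> w)"
    unfolding e by (simp add: cross7_lin tab inn inner_add_left inner_diff_left algebra_simps)
  show "cross7 s s' \<bullet> w = (s \<bullet> u) * (s' \<bullet> v) - (s \<bullet> v) * (s' \<bullet> u)"
    unfolding e by (simp add: cross7_lin tab inn inner_add_left inner_diff_left algebra_simps)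
qed

end


context aplane begin

definition Xop :: "R7 \<Rightarrow> R7 \<Rightarrow> real^7^7" where
  "Xop s t = op_of_form (\<lambda>a b. (cross7 s (proj a) + cross7 t (a - proj a)) \<bullet> b)"

lemma Xop_apply: "Xop s t *v a = cross7 s (proj a) + cross7 t (a - proj a)"
proof -
  have "linear (\<lambda>a. cross7 s (proj a) + cross7 t (a - proj a))"
    by (rule linearI) (simp_all add: proj_add proj_scale cross7_lin algebra_simps)
  then show ?thesis unfolding Xop_def by (rule op_apply_vec)
qed

lemma hook_Xop: "hook t = Xop t t"
  unfolding matrix_eq by (simp add: hook_apply Xop_apply cross7_lin)

lemma Xop_add: "Xop s t + Xop s' t' = Xop (s + s') (t + t')"
  unfolding matrix_eq by (simp add: matrix_vector_mult_add_rdistrib Xop_apply cross7_lin)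

lemma Xop_scale: "c *\<^sub>R Xop s t = Xop (c *\<^sub>R s) (c *\<^sub>R t)"
  unfolding matrix_eq by (simp add: scaleR_matrix_vector_assoc[symmetric] Xop_apply cross7_lin scaleR_add_right scaleR_diff_right)

lemma Xop_zero: "Xop 0 0 = 0"
  unfolding matrix_eq by (simp add: Xop_apply)

lemma wedge_Xop: assumes a: "a \<in> P" and b: "b \<in> P" shows "wedge a b = Xop (cross7 a b) 0"
  unfolding matrix_eq
proof
  fix x
  let ?y = "proj x"
  have y: "?y \<in> P" by (rule proj_in)
  have ax: "a \<bullet> x = a \<bullet> ?y" using orth_inner[OF orth_proj a, of x] by (simp add: inner_diff_right)
  have bx: "b \<bullet> x = b \<bullet> ?y" using orth_inner[OF orth_proj b, of x] by (simp add: inner_diff_right)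
  have "cross7 (cross7 a b) ?y = - cross7 ?y (cross7 a b)" by (rule cross7_anti)
  also have "\<dots> = (?y \<bullet> a) *\<^sub>R b - (?y \<bullet> b) *\<^sub>R a" using assocP[OF y a b] by simp
  finally show "wedge a b *v x = Xop (cross7 a b) 0 *v x"
    by (simp add: wedge_apply Xop_apply ax bx inner_commute)
qed

lemma PsiF_Xop: assumes a: "a \<in> P" and b: "b \<in> P" shows "PsiF a b = Xop 0 (- cross7 a b)"
  unfolding matrix_eq
proof
  fix x
  let ?y = "proj x" and ?r = "x - proj x"
  have r: "orth ?r" by (rule orth_proj)
  have "chiv a b x = chiv a b ?y + chiv a b ?r"
    by (metis chiv_add3 diff_add_cancel add.commute)
  also have "chiv a b ?y = 0" using chiv_P[OF a b proj_in] .
  also have "chiv a b ?r = - cross7 (cross7 a b) ?r"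
    using K4[OF a b r] orth_inner[OF r a] by (simp add: idC)
  finally show "PsiF a b *v x = Xop 0 (- cross7 a b) *v x"
    by (simp add: PsiF_apply Xop_apply cross7_lin)
qed

lemma linear_Xop1: "linear (\<lambda>d. Xop d 0)"
  by (rule linearI) (simp_all add: Xop_add Xop_scale)
lemma linear_Xop2: "linear (\<lambda>d. Xop 0 d)"
  by (rule linearI) (simp_all add: Xop_add Xop_scale)

lemma Xop_expand1: "d \<in> P \<Longrightarrow> Xop d 0 = (d \<bullet> u) *\<^sub>R Xop u 0 + (d \<bullet> v) *\<^sub>R Xop v 0 + (d \<bullet> w) *\<^sub>R Xop w 0"
  by (subst expand, assumption) (simp add: Xop_add Xop_scale)
lemma Xop_expand2: "d \<in> P \<Longrightarrow> Xop 0 d = (d \<bullet> u) *\<^sub>R Xop 0 u + (d \<bullet> v) *\<^sub>R Xop 0 v + (d \<bullet> w) *\<^sub>R Xop 0 w"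
  by (subst expand, assumption) (simp add: Xop_add Xop_scale)

lemma Lambda2_eq: "Lambda2 P = (\<lambda>d. Xop d 0) ` P"
proof
  show "Lambda2 P \<subseteq> (\<lambda>d. Xop d 0) ` P"
    unfolding Lambda2_def
  proof (rule span_minimal)
    show "subspace ((\<lambda>d. Xop d 0) ` P)"
      by (rule linear_subspace_image[OF linear_Xop1 subP])
    show "{wedge a b |a b. a \<in> P \<and> b \<in> P} \<subseteq> (\<lambda>d. Xop d 0) ` P"
      using wedge_Xop closP by blast
  qed
  show "(\<lambda>d. Xop d 0) ` P \<subseteq> Lambda2 P"
  proof
    fix X assume "X \<in> (\<lambda>d. Xop d 0) ` P"
    then obtain d where d: "d \<in> P" "X = Xop d 0" by auto
    let ?G = "{wedge a b |a b. a \<in> P \<and> b \<in> P}"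
    have "Xop u 0 = wedge v w" using wedge_Xop[OF vP wP] tab by simp
    then have "Xop u 0 \<in> span ?G" using vP wP by (intro span_base) blast
    moreover have "Xop v 0 = wedge w u" using wedge_Xop[OF wP uP] tab by simp
    then have "Xop v 0 \<in> span ?G" using uP wP by (intro span_base) blast
    moreover have "Xop w 0 = wedge u v" using wedge_Xop[OF uP vP] tab by simp
    then have "Xop w 0 \<in> span ?G" using uP vP by (intro span_base) blast
    ultimately show "X \<in> Lambda2 P" unfolding Lambda2_def d(2) Xop_expand1[OF d(1)]
      by (intro span_add span_scale)
  qed
qed

lemma PsiS_eq: "PsiS P = (\<lambda>d. Xop 0 d) ` P"
proof
  show "PsiS P \<subseteq> (\<lambda>d. Xop 0 d) ` P"
    unfolding PsiS_def
  proof (rule span_minimal)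
    show "subspace ((\<lambda>d. Xop 0 d) ` P)"
      by (rule linear_subspace_image[OF linear_Xop2 subP])
    have "- cross7 a b \<in> P" if "a \<in> P" "b \<in> P" for a b
      using closP[OF that] subP by (simp add: subspace_neg)
    then show "{PsiF a b |a b. a \<in> P \<and> b \<in> P} \<subseteq> (\<lambda>d. Xop 0 d) ` P"
      using PsiF_Xop by blast
  qed
  show "(\<lambda>d. Xop 0 d) ` P \<subseteq> PsiS P"
  proof
    fix X assume "X \<in> (\<lambda>d. Xop 0 d) ` P"
    then obtain d where d: "d \<in> P" "X = Xop 0 d" by auto
    let ?G = "{PsiF a b |a b. a \<in> P \<and> b \<in> P}"
    have "Xop 0 u = PsiF w v" using PsiF_Xop[OF wP vP] tab by simp
    then have "Xop 0 u \<in> span ?G" using vP wP by (intro span_base) blast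
    moreover have "Xop 0 v = PsiF u w" using PsiF_Xop[OF uP wP] tab by simp
    then have "Xop 0 v \<in> span ?G" using uP wP by (intro span_base) blast
    moreover have "Xop 0 w = PsiF v u" using PsiF_Xop[OF vP uP] tab by simp
    then have "Xop 0 w \<in> span ?G" using uP vP by (intro span_base) blast
    ultimately show "X \<in> PsiS P" unfolding PsiS_def d(2) Xop_expand2[OF d(1)]
      by (intro span_add span_scale)
  qed
qed

lemma Theta_eq: "Theta P = {Xop s t | s t. s \<in> P \<and> t \<in> P}"
proof
  show "Theta P \<subseteq> {Xop s t | s t. s \<in> P \<and> t \<in> P}"
    unfolding Theta_def setsum_def Lambda2_eq PsiS_eq by (fastforce simp: Xop_add)
  show "{Xop s t | s t. s \<in> P \<and> t \<in> P} \<subseteq> Theta P"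
  proof
    fix X assume "X \<in> {Xop s t | s t. s \<in> P \<and> t \<in> P}"
    then obtain s t where st: "s \<in> P" "t \<in> P" "X = Xop s t" by auto
    have "X = Xop s 0 + Xop 0 t" using st by (simp add: Xop_add)
    then show "X \<in> Theta P" unfolding Theta_def setsum_def Lambda2_eq PsiS_eq using st by blast
  qed
qed

lemma Theta_mem: "s \<in> P \<Longrightarrow> t \<in> P \<Longrightarrow> Xop s t \<in> Theta P"
  unfolding Theta_eq by blast

lemma hookset_eq: "hookset P = {Xop t t | t. t \<in> P}"
  unfolding hookset_def by (simp add: hook_Xop)

end


context aplane begin

lemma ex_z: "\<exists>z. z \<bullet> z = 1 \<and> orth z"
proof -
  have "dim P < DIM(R7)" using dimP by simp
  then obtain x where x: "x \<noteq> 0" "\<And>y. y \<in> span P \<Longrightarrow> orthogonal x y"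
    using orthogonal_to_subspace_exists by blast
  have sP: "span P = P" using subP by simp
  define z where "z = (1 / norm x) *\<^sub>R x"
  have "z \<bullet> z = 1" unfolding z_def using x(1)
    by (simp add: inner_scaleR_left inner_scaleR_right power2_norm_eq_inner[symmetric] power2_eq_square)
  moreover have "orth z" unfolding orth_def z_def using x(2) sP
    by (auto simp: orthogonal_def inner_scaleR_left)
  ultimately show ?thesis by blast
qed

definition "z = (SOME z. z \<bullet> z = 1 \<and> orth z)"
lemma zz: "z \<bullet> z = 1" and orth_z: "orth z"
  using someI_ex[OF ex_z] unfolding z_def[symmetric] by auto

lemma proj_z: "proj z = 0" using proj_orth[OF orth_z] .

lemma Xop_v: "s \<in> P \<Longrightarrow> (Xop s t *v v) \<bullet> w = s \<bullet> u"
  by (simp add: Xop_apply proj_P vP triple tab)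
lemma Xop_w: "s \<in> P \<Longrightarrow> (Xop s t *v w) \<bullet> u = s \<bullet> v"
  by (simp add: Xop_apply proj_P wP triple tab)
lemma Xop_u: "s \<in> P \<Longrightarrow> (Xop s t *v u) \<bullet> v = s \<bullet> w"
  by (simp add: Xop_apply proj_P uP triple tab)
lemma Xop_z: "t \<in> P \<Longrightarrow> x \<in> P \<Longrightarrow> (Xop s t *v z) \<bullet> cross7 x z = t \<bullet> x"
  using orth_inner[OF orth_z, of t] orth_inner[OF orth_z, of x]
  by (simp add: Xop_apply proj_z lagrange2 zz)

lemma P_eq_coords: "s \<in> P \<Longrightarrow> s' \<in> P \<Longrightarrow> s \<bullet> u = s' \<bullet> u \<Longrightarrow> s \<bullet> v = s' \<bullet> v \<Longrightarrow> s \<bullet> w = s' \<bullet> w \<Longrightarrow> s = s'"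
  by (metis expand)

lemma Xop_inj:
  assumes "s \<in> P" "t \<in> P" "s' \<in> P" "t' \<in> P" "Xop s t = Xop s' t'"
  shows "s = s' \<and> t = t'"
proof
  show "s = s'" using assms Xop_v Xop_w Xop_u P_eq_coords by metis
  show "t = t'"
    using assms Xop_z[of t u s] Xop_z[of t v s] Xop_z[of t w s] Xop_z[of t' u s'] Xop_z[of t' v s'] Xop_z[of t' w s']
      uP vP wP P_eq_coords by metis
qed

lemma bracket_Xop:
  assumes s: "s \<in> P" and t: "t \<in> P" and s': "s' \<in> P" and t': "t' \<in> P"
  shows "bracket (Xop s t) (Xop s' t') = Xop (cross7 s s') ((-2) *\<^sub>R cross7 t t')"
  unfolding matrix_eq
proof
  fix a
  let ?p = "proj a" and ?r = "a - proj a"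
  have p: "?p \<in> P" by (rule proj_in)
  have r: "orth ?r" by (rule orth_proj)
  have A: "Xop s t *v (Xop s' t' *v a) = cross7 s (cross7 s' ?p) + cross7 t (cross7 t' ?r)"
  proof -
    have "proj (cross7 s' ?p + cross7 t' ?r) = cross7 s' ?p"
      by (rule proj_decomp[OF closP[OF s' p] orth_cross[OF t' r]])
    then show ?thesis by (simp add: Xop_apply)
  qed
  have B: "Xop s' t' *v (Xop s t *v a) = cross7 s' (cross7 s ?p) + cross7 t' (cross7 t ?r)"
  proof -
    have "proj (cross7 s ?p + cross7 t ?r) = cross7 s ?p"
      by (rule proj_decomp[OF closP[OF s p] orth_cross[OF t r]])
    then show ?thesis by (simp add: Xop_apply)
  qed
  have C1: "cross7 s (cross7 s' ?p) - cross7 s' (cross7 s ?p) = cross7 (cross7 s s') ?p"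
  proof -
    have e1: "cross7 s (cross7 s' ?p) = (s \<bullet> ?p) *\<^sub>R s' - (s \<bullet> s') *\<^sub>R ?p" by (rule assocP[OF s s' p])
    have e2: "cross7 s' (cross7 s ?p) = (s' \<bullet> ?p) *\<^sub>R s - (s' \<bullet> s) *\<^sub>R ?p" by (rule assocP[OF s' s p])
    have e3: "cross7 (cross7 s s') ?p = - ((?p \<bullet> s') *\<^sub>R s - (?p \<bullet> s) *\<^sub>R s')"
      using assocP[OF p s s'] cross7_anti[of "cross7 s s'" ?p] by simp
    show ?thesis unfolding e1 e2 e3 by (simp add: inner_commute algebra_simps)
  qed
  have C2: "cross7 t (cross7 t' ?r) - cross7 t' (cross7 t ?r) = cross7 ((-2) *\<^sub>R cross7 t t') ?r"
  proof -
    have e1: "cross7 t (cross7 t' ?r) = - cross7 (cross7 t t') ?r - (t \<bullet> t') *\<^sub>R ?r" by (rule K4[OF t t' r])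
    have e2: "cross7 t' (cross7 t ?r) = - cross7 (cross7 t' t) ?r - (t' \<bullet> t) *\<^sub>R ?r" by (rule K4[OF t' t r])
    have e3: "cross7 t' t = - cross7 t t'" by (rule cross7_anti)
    show ?thesis unfolding e1 e2 e3 cross7_minus_left cross7_scale_left inner_commute[of t' t]
      by (simp add: scaleR_2 algebra_simps)
  qed
  show "bracket (Xop s t) (Xop s' t') *v a = Xop (cross7 s s') ((-2) *\<^sub>R cross7 t t') *v a"
    unfolding bracket_apply A B using C1 C2 by (simp add: Xop_apply algebra_simps)
qed

lemma Theta_subspace: "subspace (Theta P)"
  unfolding subspace_def
proof (intro conjI ballI allI)
  show "0 \<in> Theta P" using Theta_mem[of 0 0] Xop_zero subP subspace_0 by metis
next
  fix X Y assume "X \<in> Theta P" "Y \<in> Theta P"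
  then obtain s t s' t' where st: "s \<in> P" "t \<in> P" "s' \<in> P" "t' \<in> P" "X = Xop s t" "Y = Xop s' t'"
    unfolding Theta_eq by auto
  then show "X + Y \<in> Theta P" using subP by (simp add: Xop_add Theta_mem subspace_add)
next
  fix c :: real and X assume "X \<in> Theta P"
  then obtain s t where st: "s \<in> P" "t \<in> P" "X = Xop s t"
    unfolding Theta_eq by auto
  then show "c *\<^sub>R X \<in> Theta P" using subP by (simp add: Xop_scale Theta_mem subspace_scale)
qed

lemma Theta_lie: "lie_subalgebra (Theta P)"
  unfolding lie_subalgebra_def
proof (intro conjI ballI)
  show "subspace (Theta P)" by (rule Theta_subspace)
  fix X Y assume "X \<in> Theta P" "Y \<in> Theta P"
  then obtain s t s' t' where st: "s \<in> P" "t \<in> P" "s' \<in> P" "t' \<in> P" "X = Xop s t" "Y = Xop s' t'"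
    unfolding Theta_eq by auto
  have c1: "cross7 s s' \<in> P" using closP st by simp
  have c2: "(-2) *\<^sub>R cross7 t t' \<in> P" by (rule subspace_scale[OF subP closP[OF st(2,4)]])
  show "bracket X Y \<in> Theta P"
    unfolding st(5,6) bracket_Xop[OF st(1-4)] by (rule Theta_mem[OF c1 c2])
qed

lemma L2_Psi_inter: "Lambda2 P \<inter> PsiS P = {0}"
proof
  show "Lambda2 P \<inter> PsiS P \<subseteq> {0}"
  proof
    fix X assume "X \<in> Lambda2 P \<inter> PsiS P"
    then obtain d e where de: "d \<in> P" "e \<in> P" "X = Xop d 0" "X = Xop 0 e"
      unfolding Lambda2_eq PsiS_eq by auto
    then have "d = 0 \<and> 0 = e" using Xop_inj subP subspace_0 by metis
    then show "X \<in> {0}" using de Xop_zero by simp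
  qed
  show "{0} \<subseteq> Lambda2 P \<inter> PsiS P"
    unfolding Lambda2_eq PsiS_eq using Xop_zero subP subspace_0 by force
qed

lemma L2_hook_inter: "Lambda2 P \<inter> hookset P = {0}"
proof
  show "Lambda2 P \<inter> hookset P \<subseteq> {0}"
  proof
    fix X assume "X \<in> Lambda2 P \<inter> hookset P"
    then obtain d e where de: "d \<in> P" "e \<in> P" "X = Xop d 0" "X = Xop e e"
      unfolding Lambda2_eq hookset_eq by auto
    then have "d = e \<and> 0 = e" using Xop_inj subP subspace_0 by metis
    then show "X \<in> {0}" using de Xop_zero by simp
  qed
  show "{0} \<subseteq> Lambda2 P \<inter> hookset P"
    unfolding Lambda2_eq hookset_eq using Xop_zero subP subspace_0 by force
qed

lemma L2_Psi_orth: "X \<in> Lambda2 P \<Longrightarrow> Y \<in> PsiS P \<Longrightarrow> form_inner X Y = 0"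
proof -
  assume "X \<in> Lambda2 P" "Y \<in> PsiS P"
  then obtain d e where de: "d \<in> P" "e \<in> P" "X = Xop d 0" "Y = Xop 0 e"
    unfolding Lambda2_eq PsiS_eq by auto
  have "(Xop d 0 *v x) \<bullet> (Xop 0 e *v x) = 0" for x
  proof -
    have "orth (cross7 e (x - proj x))" by (rule orth_cross[OF de(2) orth_proj])
    then have "cross7 d (proj x) \<bullet> cross7 e (x - proj x) = 0"
      using orth_inner closP[OF de(1) proj_in] by blast
    then show ?thesis by (simp add: Xop_apply)
  qed
  then show ?thesis unfolding form_inner_alt de by simp
qed

lemma Theta_hook: "Theta P = setsum (Lambda2 P) (hookset P)"
proof
  show "Theta P \<subseteq> setsum (Lambda2 P) (hookset P)"
  proof
    fix X assume "X \<in> Theta P"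
    then obtain s t where st: "s \<in> P" "t \<in> P" "X = Xop s t" unfolding Theta_eq by auto
    have "X = Xop (s - t) 0 + Xop t t" using st by (simp add: Xop_add)
    moreover have "s - t \<in> P" using st subP by (simp add: subspace_diff)
    ultimately show "X \<in> setsum (Lambda2 P) (hookset P)"
      unfolding setsum_def Lambda2_eq hookset_eq using st by blast
  qed
  show "setsum (Lambda2 P) (hookset P) \<subseteq> Theta P"
  proof
    fix X assume "X \<in> setsum (Lambda2 P) (hookset P)"
    then obtain d t where dt: "d \<in> P" "t \<in> P" "X = Xop d 0 + Xop t t"
      unfolding setsum_def Lambda2_eq hookset_eq by blast
    have "X = Xop (d + t) t" using dt by (simp add: Xop_add)
    moreover have "d + t \<in> P" using dt subP by (simp add: subspace_add)
    ultimately show "X \<in> Theta P" using Theta_mem dt by simp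
  qed
qed

end


definition so4m :: "real \<Rightarrow> real \<Rightarrow> real \<Rightarrow> real \<Rightarrow> real \<Rightarrow> real \<Rightarrow> real^4^4" where
  "so4m x1 x2 x3 y1 y2 y3 = (\<chi> i j.
     if i = 1 \<and> j = 2 then -(x3+y3)/2 else if i = 2 \<and> j = 1 then (x3+y3)/2
     else if i = 1 \<and> j = 3 then (x2+y2)/2 else if i = 3 \<and> j = 1 then -(x2+y2)/2
     else if i = 1 \<and> j = 4 then (x1-y1)/2 else if i = 4 \<and> j = 1 then -(x1-y1)/2
     else if i = 2 \<and> j = 3 then -(x1+y1)/2 else if i = 3 \<and> j = 2 then (x1+y1)/2
     else if i = 2 \<and> j = 4 then (x2-y2)/2 else if i = 4 \<and> j = 2 then -(x2-y2)/2
     else if i = 3 \<and> j = 4 then (x3-y3)/2 else if i = 4 \<and> j = 3 then -(x3-y3)/2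
     else 0)"

lemma so4m_entries:
  "so4m x1 x2 x3 y1 y2 y3 $ 1 $ 1 = 0" "so4m x1 x2 x3 y1 y2 y3 $ 2 $ 2 = 0"
  "so4m x1 x2 x3 y1 y2 y3 $ 3 $ 3 = 0" "so4m x1 x2 x3 y1 y2 y3 $ 4 $ 4 = 0"
  "so4m x1 x2 x3 y1 y2 y3 $ 1 $ 2 = -(x3+y3)/2" "so4m x1 x2 x3 y1 y2 y3 $ 2 $ 1 = (x3+y3)/2"
  "so4m x1 x2 x3 y1 y2 y3 $ 1 $ 3 = (x2+y2)/2" "so4m x1 x2 x3 y1 y2 y3 $ 3 $ 1 = -(x2+y2)/2"
  "so4m x1 x2 x3 y1 y2 y3 $ 1 $ 4 = (x1-y1)/2" "so4m x1 x2 x3 y1 y2 y3 $ 4 $ 1 = -(x1-y1)/2"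
  "so4m x1 x2 x3 y1 y2 y3 $ 2 $ 3 = -(x1+y1)/2" "so4m x1 x2 x3 y1 y2 y3 $ 3 $ 2 = (x1+y1)/2"
  "so4m x1 x2 x3 y1 y2 y3 $ 2 $ 4 = (x2-y2)/2" "so4m x1 x2 x3 y1 y2 y3 $ 4 $ 2 = -(x2-y2)/2"
  "so4m x1 x2 x3 y1 y2 y3 $ 3 $ 4 = (x3-y3)/2" "so4m x1 x2 x3 y1 y2 y3 $ 4 $ 3 = -(x3-y3)/2"
  by (simp_all add: so4m_def)

lemma mat4_eq: "(A::real^4^4) = B \<longleftrightarrow> (\<forall>i j. A $ i $ j = B $ i $ j)"
  by (simp add: vec_eq_iff)

lemma so4m_bracket:
  "bracket (so4m x1 x2 x3 y1 y2 y3) (so4m a1 a2 a3 b1 b2 b3) =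
   so4m (x2*a3 - x3*a2) (x3*a1 - x1*a3) (x1*a2 - x2*a1) (y2*b3 - y3*b2) (y3*b1 - y1*b3) (y1*b2 - y2*b1)"
  unfolding mat4_eq forall_4 bracket_def
  by (simp add: matrix_matrix_mult_def sum_4 so4m_entries algebra_simps divide_simps)

lemma so4m_add: "so4m x1 x2 x3 y1 y2 y3 + so4m a1 a2 a3 b1 b2 b3 =
   so4m (x1+a1) (x2+a2) (x3+a3) (y1+b1) (y2+b2) (y3+b3)"
  unfolding mat4_eq forall_4 by (simp add: so4m_entries algebra_simps divide_simps)

lemma so4m_scale: "c *\<^sub>R so4m x1 x2 x3 y1 y2 y3 = so4m (c*x1) (c*x2) (c*x3) (c*y1) (c*y2) (c*y3)"
  unfolding mat4_eq forall_4 by (simp add: so4m_entries algebra_simps divide_simps)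

lemma so4m_in: "so4m x1 x2 x3 y1 y2 y3 \<in> so"
  unfolding so_def mem_Collect_eq mat4_eq forall_4 by (simp add: transpose_def so4m_entries field_simps)

lemma so4m_inj: "so4m x1 x2 x3 y1 y2 y3 = so4m a1 a2 a3 b1 b2 b3 \<Longrightarrow>
   x1 = a1 \<and> x2 = a2 \<and> x3 = a3 \<and> y1 = b1 \<and> y2 = b2 \<and> y3 = b3"
  unfolding mat4_eq forall_4 by (simp add: so4m_entries)

lemma so4m_surj: "A \<in> (so :: (real^4^4) set) \<Longrightarrow>
  A = so4m (A$1$4 - A$2$3) (A$1$3 + A$2$4) (A$3$4 - A$1$2) (- A$1$4 - A$2$3) (A$1$3 - A$2$4) (- A$1$2 - A$3$4)"
proof -
  assume "A \<in> so"
  then have h: "transpose A = - A" unfolding so_def by simp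
  have h2: "A $ j $ i = - (A $ i $ j)" for i j
  proof -
    have "transpose A $ i $ j = (- A) $ i $ j" using h by simp
    then show ?thesis by (simp add: transpose_def)
  qed
  have d: "A$1$1 = 0" "A$2$2 = 0" "A$3$3 = 0" "A$4$4 = 0"
    using h2[of 1 1] h2[of 2 2] h2[of 3 3] h2[of 4 4] by simp_all
  have s: "A$2$1 = - A$1$2" "A$3$1 = - A$1$3" "A$4$1 = - A$1$4"
    "A$3$2 = - A$2$3" "A$4$2 = - A$2$4" "A$4$3 = - A$3$4"
    using h2[of 1 2] h2[of 1 3] h2[of 1 4] h2[of 2 3] h2[of 2 4] h2[of 3 4] by simp_all
  show ?thesis unfolding mat4_eq forall_4 by (simp add: so4m_entries d s field_simps)
qed

context aplane begin

definition fso4 :: "real^7^7 \<Rightarrow> real^4^4" where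
  "fso4 X = so4m ((X *v v) \<bullet> w) ((X *v w) \<bullet> u) ((X *v u) \<bullet> v)
     (-2 * ((X *v z) \<bullet> cross7 u z)) (-2 * ((X *v z) \<bullet> cross7 v z)) (-2 * ((X *v z) \<bullet> cross7 w z))"

lemma fso4_linear: "linear fso4"
  by (rule linearI)
     (simp_all add: fso4_def so4m_add so4m_scale matrix_vector_mult_add_rdistrib
        scaleR_matrix_vector_assoc[symmetric] inner_add_left algebra_simps)

lemma fso4_Xop: "s \<in> P \<Longrightarrow> t \<in> P \<Longrightarrow>
   fso4 (Xop s t) = so4m (s \<bullet> u) (s \<bullet> v) (s \<bullet> w) (-2 * (t \<bullet> u)) (-2 * (t \<bullet> v)) (-2 * (t \<bullet> w))"
  by (simp add: fso4_def Xop_v Xop_w Xop_u Xop_z uP vP wP)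

lemma Theta_iso: "lie_isomorphic (Theta P) (so :: (real^4^4) set)"
  unfolding lie_isomorphic_def
proof (intro exI conjI ballI)
  show "linear fso4" by (rule fso4_linear)
  show "bij_betw fso4 (Theta P) so"
    unfolding bij_betw_def
  proof
    show "inj_on fso4 (Theta P)"
    proof (rule inj_onI)
      fix X Y assume X: "X \<in> Theta P" and Y: "Y \<in> Theta P" and e: "fso4 X = fso4 Y"
      obtain s t where st: "s \<in> P" "t \<in> P" "X = Xop s t" using X unfolding Theta_eq by auto
      obtain s' t' where st': "s' \<in> P" "t' \<in> P" "Y = Xop s' t'" using Y unfolding Theta_eq by auto
      have "s \<bullet> u = s' \<bullet> u \<and> s \<bullet> v = s' \<bullet> v \<and> s \<bullet> w = s' \<bullet> w \<and>
            t \<bullet> u = t' \<bullet> u \<and> t \<bullet> v = t' \<bullet> v \<and> t \<bullet> w = t' \<bullet> w"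
        using so4m_inj[OF e[unfolded st(3) st'(3) fso4_Xop[OF st(1,2)] fso4_Xop[OF st'(1,2)]]] by simp
      then have "s = s'" "t = t'" using P_eq_coords st st' by metis+
      then show "X = Y" using st st' by simp
    qed
    show "fso4 ` Theta P = so"
    proof
      show "fso4 ` Theta P \<subseteq> so"
        unfolding Theta_eq using fso4_Xop so4m_in by auto
      show "so \<subseteq> fso4 ` Theta P"
      proof
        fix A :: "real^4^4" assume A: "A \<in> so"
        define x1 where "x1 = A$1$4 - A$2$3"
        define x2 where "x2 = A$1$3 + A$2$4"
        define x3 where "x3 = A$3$4 - A$1$2"
        define y1 where "y1 = - A$1$4 - A$2$3"
        define y2 where "y2 = A$1$3 - A$2$4"
        define y3 where "y3 = - A$1$2 - A$3$4"
        define s where "s = x1 *\<^sub>R u + x2 *\<^sub>R v + x3 *\<^sub>R w"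
        define t where "t = (-1/2) *\<^sub>R (y1 *\<^sub>R u + y2 *\<^sub>R v + y3 *\<^sub>R w)"
        have sP: "s \<in> P" unfolding s_def using subP uP vP wP by (intro subspace_add subspace_scale) auto
        have tP: "t \<in> P" unfolding t_def using subP uP vP wP by (intro subspace_add subspace_scale) auto
        have "fso4 (Xop s t) = so4m (s \<bullet> u) (s \<bullet> v) (s \<bullet> w) (-2 * (t \<bullet> u)) (-2 * (t \<bullet> v)) (-2 * (t \<bullet> w))"
          by (rule fso4_Xop[OF sP tP])
        also have "\<dots> = so4m x1 x2 x3 y1 y2 y3"
          unfolding s_def t_def by (simp add: inner_add_left inn)
        also have "\<dots> = A" using so4m_surj[OF A] unfolding x1_def x2_def x3_def y1_def y2_def y3_def by simp
        finally show "A \<in> fso4 ` Theta P" unfolding Theta_eq using sP tP by force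
      qed
    qed
  qed
  fix X Y assume X: "X \<in> Theta P" and Y: "Y \<in> Theta P"
  obtain s t where st: "s \<in> P" "t \<in> P" "X = Xop s t" using X unfolding Theta_eq by auto
  obtain s' t' where st': "s' \<in> P" "t' \<in> P" "Y = Xop s' t'" using Y unfolding Theta_eq by auto
  have c1: "cross7 s s' \<in> P" using closP st st' by simp
  have c2: "(-2) *\<^sub>R cross7 t t' \<in> P" by (rule subspace_scale[OF subP closP[OF st(2) st'(2)]])
  show "fso4 (bracket X Y) = bracket (fso4 X) (fso4 Y)"
    unfolding st(3) st'(3) bracket_Xop[OF st(1,2) st'(1,2)] fso4_Xop[OF c1 c2]
      fso4_Xop[OF st(1,2)] fso4_Xop[OF st'(1,2)] so4m_bracket
    by (simp add: coords[OF st(1) st'(1)] coords[OF st(2) st'(2)] algebra_simps)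
qed

end


lemma grp1: assumes "p + q + r = (0::'a::ab_group_add)" shows "p = - (q + r)"
proof -
  have "p + (q + r) = 0" using assms by (simp add: add.assoc)
  then show ?thesis by (simp only: eq_neg_iff_add_eq_0)
qed
lemma grp2: assumes "p + q + r = (0::'a::ab_group_add)" shows "q = - (p + r)"
proof -
  have "q + (p + r) = 0" using assms by (simp add: ac_simps)
  then show ?thesis by (simp only: eq_neg_iff_add_eq_0)
qed
lemma grp3: assumes "p + q + r = (0::'a::ab_group_add)" shows "r = - (p + q)"
proof -
  have "r + (p + q) = 0" using assms by (simp add: ac_simps)
  then show ?thesis by (simp only: eq_neg_iff_add_eq_0)
qed

context aplane begin

lemma normsq: "d \<in> P \<Longrightarrow> d \<bullet> d = (d \<bullet> u)^2 + (d \<bullet> v)^2 + (d \<bullet> w)^2"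
proof -
  assume d: "d \<in> P"
  have "d \<bullet> d = d \<bullet> ((d \<bullet> u) *\<^sub>R u + (d \<bullet> v) *\<^sub>R v + (d \<bullet> w) *\<^sub>R w)"
    using expand[OF d] by simp
  then show ?thesis by (simp add: inner_add_right power2_eq_square)
qed

lemma cross_proj_span:
  assumes d: "d \<in> P"
  shows "\<exists>T. finite T \<and> card T \<le> 2 \<and> (\<forall>a. cross7 d (proj a) \<in> span T)"
proof -
  have ex: "cross7 d (proj a) = (a \<bullet> u) *\<^sub>R cross7 d u + (a \<bullet> v) *\<^sub>R cross7 d v + (a \<bullet> w) *\<^sub>R cross7 d w" for a
    by (simp add: proj_def cross7_lin)
  have z0: "(d \<bullet> u) *\<^sub>R cross7 d u + (d \<bullet> v) *\<^sub>R cross7 d v + (d \<bullet> w) *\<^sub>R cross7 d w = 0"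
    using ex[of d] proj_P[OF d] by simp
  have main: "\<forall>a. cross7 d (proj a) \<in> span T"
    if "cross7 d u \<in> span T" "cross7 d v \<in> span T" "cross7 d w \<in> span T" for T
    using that unfolding ex by (intro allI span_add span_scale) auto
  let ?X = "cross7 d u" and ?Y = "cross7 d v" and ?Z = "cross7 d w"
  let ?a = "d \<bullet> u" and ?b = "d \<bullet> v" and ?c = "d \<bullet> w"
  consider "?a \<noteq> 0" | "?b \<noteq> 0" | "?c \<noteq> 0" | "?a = 0 \<and> ?b = 0 \<and> ?c = 0" by blast
  then show ?thesis
  proof cases
    case 1
    let ?T = "{?Y, ?Z}"
    have e: "?a *\<^sub>R ?X = - (?b *\<^sub>R ?Y + ?c *\<^sub>R ?Z)" by (rule grp1[OF z0])
    have eq: "?X = (1 / ?a) *\<^sub>R (- (?b *\<^sub>R ?Y + ?c *\<^sub>R ?Z))"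
      by (subst e[symmetric]) (simp add: 1)
    have "(1 / ?a) *\<^sub>R (- (?b *\<^sub>R ?Y + ?c *\<^sub>R ?Z)) \<in> span ?T"
      by (intro span_scale span_neg span_add span_base) auto
    then have "?X \<in> span ?T" using eq by simp
    then have "\<forall>a. cross7 d (proj a) \<in> span ?T" by (intro main) (auto intro: span_base)
    moreover have "card ?T \<le> 2" by (simp add: card_insert_if)
    ultimately show ?thesis by (intro exI[of _ ?T]) simp
  next
    case 2
    let ?T = "{?X, ?Z}"
    have e: "?b *\<^sub>R ?Y = - (?a *\<^sub>R ?X + ?c *\<^sub>R ?Z)" by (rule grp2[OF z0])
    have eq: "?Y = (1 / ?b) *\<^sub>R (- (?a *\<^sub>R ?X + ?c *\<^sub>R ?Z))"
      by (subst e[symmetric]) (simp add: 2)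
    have "(1 / ?b) *\<^sub>R (- (?a *\<^sub>R ?X + ?c *\<^sub>R ?Z)) \<in> span ?T"
      by (intro span_scale span_neg span_add span_base) auto
    then have "?Y \<in> span ?T" using eq by simp
    then have "\<forall>a. cross7 d (proj a) \<in> span ?T" by (intro main) (auto intro: span_base)
    moreover have "card ?T \<le> 2" by (simp add: card_insert_if)
    ultimately show ?thesis by (intro exI[of _ ?T]) simp
  next
    case 3
    let ?T = "{?X, ?Y}"
    have e: "?c *\<^sub>R ?Z = - (?a *\<^sub>R ?X + ?b *\<^sub>R ?Y)" by (rule grp3[OF z0])
    have eq: "?Z = (1 / ?c) *\<^sub>R (- (?a *\<^sub>R ?X + ?b *\<^sub>R ?Y))"
      by (subst e[symmetric]) (simp add: 3)
    have "(1 / ?c) *\<^sub>R (- (?a *\<^sub>R ?X + ?b *\<^sub>R ?Y)) \<in> span ?T"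
      by (intro span_scale span_neg span_add span_base) auto
    then have "?Z \<in> span ?T" using eq by simp
    then have "\<forall>a. cross7 d (proj a) \<in> span ?T" by (intro main) (auto intro: span_base)
    moreover have "card ?T \<le> 2" by (simp add: card_insert_if)
    ultimately show ?thesis by (intro exI[of _ ?T]) simp
  next
    case 4
    then have "d = 0" using expand[OF d] by simp
    then show ?thesis by (intro exI[of _ "{}"]) simp
  qed
qed

lemma cross_nonzero: "d \<in> P \<Longrightarrow> d \<noteq> 0 \<Longrightarrow> \<exists>x\<in>P. cross7 d x \<noteq> 0"
proof (rule ccontr)
  assume d: "d \<in> P" "d \<noteq> 0" and "\<not> (\<exists>x\<in>P. cross7 d x \<noteq> 0)"
  then have "cross7 d u = 0" "cross7 d v = 0" "cross7 d w = 0" using uP vP wP by auto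
  then have "(d \<bullet> d) - (d \<bullet> u)^2 = 0" "(d \<bullet> d) - (d \<bullet> v)^2 = 0" "(d \<bullet> d) - (d \<bullet> w)^2 = 0"
    using lagrange[of d u] lagrange[of d v] lagrange[of d w] inn by auto
  then have "d \<bullet> d = 0" using normsq[OF d(1)] by simp
  then show False using d(2) by simp
qed

lemma hook_Theta: "t \<in> P \<Longrightarrow> hook t \<in> Theta P"
  unfolding Theta_eq hook_Xop by blast

end

lemma hook_scale: "hook (c *\<^sub>R t) = c *\<^sub>R hook t"
  unfolding matrix_eq by (simp add: hook_apply scaleR_matrix_vector_assoc[symmetric] cross7_lin)

lemma hook_zero: "hook 0 = 0"
  unfolding matrix_eq by (simp add: hook_apply)

lemma inter_main:
  assumes A: "aplane P u v" and B: "aplane Q u' v'"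
    and small: "\<And>p q. p \<in> P \<inter> Q \<Longrightarrow> q \<in> P \<inter> Q \<Longrightarrow> p \<bullet> q = 0 \<Longrightarrow> p = 0 \<or> q = 0"
    and XP: "X \<in> Theta P" and XQ: "X \<in> Theta Q"
  shows "\<exists>t \<in> P \<inter> Q. X = hook t"
proof -
  interpret A: aplane P u v by (rule A)
  interpret B: aplane Q u' v' by (rule B)
  obtain s t where st: "s \<in> P" "t \<in> P" "X = A.Xop s t" using XP unfolding A.Theta_eq by auto
  obtain s' t' where st': "s' \<in> Q" "t' \<in> Q" "X = B.Xop s' t'" using XQ unfolding B.Theta_eq by auto
  define d where "d = s - t"
  define d' where "d' = s' - t'"
  define e where "e = t - t'"
  have dP: "d \<in> P" unfolding d_def using st A.subP by (simp add: subspace_diff)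
  have dQ: "d' \<in> Q" unfolding d'_def using st' B.subP by (simp add: subspace_diff)
  have key: "cross7 e a = cross7 d' (B.proj a) - cross7 d (A.proj a)" for a
  proof -
    have "A.Xop s t *v a = B.Xop s' t' *v a" using st(3) st'(3) by simp
    then show ?thesis unfolding A.Xop_apply B.Xop_apply e_def d_def d'_def
      by (simp add: cross7_lin algebra_simps)
  qed
  have e0: "e = 0"
  proof (rule ccontr)
    assume ne: "e \<noteq> 0"
    obtain T1 where T1: "finite T1" "card T1 \<le> 2" "\<And>a. cross7 d (A.proj a) \<in> span T1"
      using A.cross_proj_span[OF dP] by blast
    obtain T2 where T2: "finite T2" "card T2 \<le> 2" "\<And>a. cross7 d' (B.proj a) \<in> span T2"
      using B.cross_proj_span[OF dQ] by blast
    have sub: "{x. e \<bullet> x = 0} \<subseteq> span (T1 \<union> T2)"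
    proof
      fix y assume "y \<in> {x. e \<bullet> x = 0}"
      then have ey: "e \<bullet> y = 0" by simp
      have ee: "e \<bullet> e \<noteq> 0" using ne by simp
      define a where "a = (- 1 / (e \<bullet> e)) *\<^sub>R cross7 e y"
      have eq: "cross7 e a = y" unfolding a_def using ey ee by (simp add: cross7_lin cross_cross_self)
      have "cross7 e a \<in> span (T1 \<union> T2)" unfolding key
        using T1(3)[of a] T2(3)[of a] span_mono[of T1 "T1 \<union> T2"] span_mono[of T2 "T1 \<union> T2"]
        by (intro span_diff) auto
      then show "y \<in> span (T1 \<union> T2)" using eq by simp
    qed
    have "dim {x. e \<bullet> x = 0} = 6" using dim_hyperplane[OF ne] by simp
    moreover have "dim {x. e \<bullet> x = 0} \<le> card (T1 \<union> T2)"
      using dim_le_card[OF sub] T1(1) T2(1) by simp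
    moreover have "card (T1 \<union> T2) \<le> 4" using card_Un_le[of T1 T2] T1(2) T2(2) by simp
    ultimately show False by simp
  qed
  have key2: "cross7 d (A.proj a) = cross7 d' (B.proj a)" for a
    using key[of a] e0 by simp
  have d0: "d = 0"
  proof (rule ccontr)
    assume ne: "d \<noteq> 0"
    obtain x where x: "x \<in> P" "cross7 d x \<noteq> 0" using A.cross_nonzero[OF dP ne] by blast
    define p where "p = cross7 d x"
    define q where "q = cross7 d p"
    have pP: "p \<in> P" unfolding p_def using A.closP dP x by simp
    have qP: "q \<in> P" unfolding q_def using A.closP dP pP by simp
    have pne: "p \<noteq> 0" using x p_def by simp
    have dp: "d \<bullet> p = 0" unfolding p_def by simp
    have dd: "d \<bullet> d \<noteq> 0" using ne by simp
    have "q \<bullet> q = (d \<bullet> d) * (p \<bullet> p)" unfolding q_def lagrange using dp by simp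
    then have qne: "q \<noteq> 0" using dd pne by auto
    have pq: "p \<bullet> q = 0" unfolding q_def by simp
    have qQ: "q \<in> Q" unfolding q_def using key2[of p] A.proj_P[OF pP] B.closP[OF dQ B.proj_in] by simp
    have "cross7 d q = - (d \<bullet> d) *\<^sub>R p" unfolding q_def using dp by (simp add: cross_cross_self)
    moreover have "cross7 d q \<in> Q" using key2[of q] A.proj_P[OF qP] B.closP[OF dQ B.proj_in] by simp
    ultimately have "(- 1 / (d \<bullet> d)) *\<^sub>R (- (d \<bullet> d) *\<^sub>R p) \<in> Q" using B.subP by (metis subspace_scale)
    then have pQ: "p \<in> Q" using dd by simp
    show False using small[of p q] pP qP pQ qQ pq pne qne by auto
  qed
  have "X = hook t" using st(3) d0 unfolding d_def A.hook_Xop by simp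
  moreover have "t \<in> Q" using e0 st'(2) unfolding e_def by simp
  ultimately show ?thesis using st(2) by blast
qed


lemma exists_frame: "associative P \<Longrightarrow> \<exists>u v. aplane P u v"
proof -
  assume a: "associative P"
  have sP: "subspace P" and d: "dim P = 3" using a unfolding associative_def by auto
  obtain B where B: "B \<subseteq> P" "pairwise orthogonal B" "\<And>x. x \<in> B \<Longrightarrow> norm x = 1"
      "independent B" "card B = dim P" "span B = P"
    using orthonormal_basis_subspace[OF sP] by blast
  have "card B = 3" using B(5) d by simp
  then obtain x y z where xyz: "B = {x, y, z}" "x \<noteq> y" "y \<noteq> z" "x \<noteq> z"
    by (auto simp: card_3_iff)
  have "aplane P x y"
  proof
    show "associative P" by (rule a)
    show "x \<in> P" "y \<in> P" using B(1) xyz(1) by auto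
    show "x \<bullet> x = 1" "y \<bullet> y = 1" using B(3) xyz(1) by (auto simp: norm_eq_1)
    show "x \<bullet> y = 0" using B(2) xyz(1,2) by (auto simp: pairwise_def orthogonal_def)
  qed
  then show ?thesis by blast
qed

lemma partA:
  assumes "associative P"
  shows "lie_subalgebra (Theta P)
    \<and> lie_isomorphic (Theta P) (so :: (real^4^4) set)
    \<and> Lambda2 P \<inter> PsiS P = {0}
    \<and> (\<forall>X\<in>Lambda2 P. \<forall>Y\<in>PsiS P. form_inner X Y = 0)
    \<and> Theta P = setsum (Lambda2 P) (hookset P)
    \<and> Lambda2 P \<inter> hookset P = {0}"
proof -
  obtain u v where "aplane P u v" using exists_frame[OF assms] by blast
  then interpret aplane P u v .
  show ?thesis using Theta_lie Theta_iso L2_Psi_inter L2_Psi_orth Theta_hook L2_hook_inter by blast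
qed

lemma partB1:
  assumes "associative P" "associative Q"
  shows "lie_subalgebra (Theta P \<inter> Theta Q)"
proof -
  obtain u v where A: "aplane P u v" using exists_frame[OF assms(1)] by blast
  obtain u' v' where B: "aplane Q u' v'" using exists_frame[OF assms(2)] by blast
  interpret A: aplane P u v by (rule A)
  interpret B: aplane Q u' v' by (rule B)
  show ?thesis
    using A.Theta_lie B.Theta_lie unfolding lie_subalgebra_def by (auto intro: subspace_inter)
qed

lemma partB2:
  assumes "associative P" "associative Q" "P \<inter> Q = {0}"
  shows "Theta P \<inter> Theta Q = {0}"
proof -
  obtain u v where A: "aplane P u v" using exists_frame[OF assms(1)] by blast
  obtain u' v' where B: "aplane Q u' v'" using exists_frame[OF assms(2)] by blast
  interpret A: aplane P u v by (rule A)
  interpret B: aplane Q u' v' by (rule B)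
  show ?thesis
  proof
    show "Theta P \<inter> Theta Q \<subseteq> {0}"
    proof
      fix X assume "X \<in> Theta P \<inter> Theta Q"
      then obtain t where "t \<in> P \<inter> Q" "X = hook t"
        using inter_main[OF A B, of X] assms(3) by auto
      then show "X \<in> {0}" using assms(3) hook_zero by simp
    qed
    show "{0} \<subseteq> Theta P \<inter> Theta Q"
      using A.Theta_subspace B.Theta_subspace subspace_0 by auto
  qed
qed

definition J2 :: "real^2^2" where
  "J2 = (\<chi> i j. if i = 2 \<and> j = 1 then 1 else if i = 1 \<and> j = 2 then -1 else 0)"

lemma J2_entries: "J2 $ 1 $ 1 = 0" "J2 $ 1 $ 2 = -1" "J2 $ 2 $ 1 = 1" "J2 $ 2 $ 2 = 0"
  by (simp_all add: J2_def)

lemma so2_J2: "c *\<^sub>R J2 \<in> so"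
  unfolding so_def mem_Collect_eq by (simp add: vec_eq_iff forall_2 transpose_def J2_entries)

lemma so2_surj: "(A::real^2^2) \<in> so \<Longrightarrow> A = (A $ 2 $ 1) *\<^sub>R J2"
proof -
  assume "A \<in> so"
  then have h: "transpose A = - A" unfolding so_def by simp
  have h2: "A $ j $ i = - (A $ i $ j)" for i j
  proof -
    have "transpose A $ i $ j = (- A) $ i $ j" using h by simp
    then show ?thesis by (simp add: transpose_def)
  qed
  have "A $ 1 $ 1 = 0" "A $ 2 $ 2 = 0" "A $ 1 $ 2 = - (A $ 2 $ 1)"
    using h2[of 1 1] h2[of 2 2] h2[of 2 1] by simp_all
  then show ?thesis by (simp add: vec_eq_iff forall_2 J2_entries)
qed

lemma bracket_scale_same: "bracket (a *\<^sub>R M) (b *\<^sub>R M) = (0::real^'n^'n)"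
  unfolding matrix_eq
  by (simp add: bracket_apply scaleR_matrix_vector_assoc[symmetric] matrix_vector_mult_scaleR)

lemma partB3:
  assumes "associative P" "associative Q" "dim (P \<inter> Q) = 1" "v \<in> P \<inter> Q" "norm v = 1"
  shows "Theta P \<inter> Theta Q = span {hook v}
        \<and> lie_isomorphic (Theta P \<inter> Theta Q) (so :: (real^2^2) set)"
proof -
  obtain u1 v1 where A: "aplane P u1 v1" using exists_frame[OF assms(1)] by blast
  obtain u2 v2 where B: "aplane Q u2 v2" using exists_frame[OF assms(2)] by blast
  interpret A: aplane P u1 v1 by (rule A)
  interpret B: aplane Q u2 v2 by (rule B)
  have vv: "v \<bullet> v = 1" using assms(5) by (simp add: norm_eq_1)
  have vne: "v \<noteq> 0" using vv by auto
  have sub: "subspace (P \<inter> Q)" using A.subP B.subP by (rule subspace_inter)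
  have small: "p = 0 \<or> q = 0" if "p \<in> P \<inter> Q" "q \<in> P \<inter> Q" "p \<bullet> q = 0" for p q
  proof (rule ccontr)
    assume "\<not> (p = 0 \<or> q = 0)"
    then have pq: "p \<noteq> 0" "q \<noteq> 0" by auto
    have "p \<noteq> q" using pq that(3) by auto
    have ind: "independent {p, q}"
      by (rule pairwise_orthogonal_independent)
         (use pq that(3) in \<open>auto simp: pairwise_def orthogonal_def inner_commute\<close>)
    have "card {p, q} \<le> dim (P \<inter> Q)"
      by (rule independent_card_le_dim) (use that ind in auto)
    then show False using \<open>p \<noteq> q\<close> assms(3) by simp
  qed
  have PQv: "P \<inter> Q \<subseteq> span {v}"
  proof (rule card_ge_dim_independent)
    show "{v} \<subseteq> P \<inter> Q" using assms(4) by simp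
    show "independent {v}"
      by (rule pairwise_orthogonal_independent) (use vne in \<open>auto simp: pairwise_def\<close>)
    show "dim (P \<inter> Q) \<le> card {v}" using assms(3) by simp
  qed
  have eq: "Theta P \<inter> Theta Q = span {hook v}"
  proof
    show "Theta P \<inter> Theta Q \<subseteq> span {hook v}"
    proof
      fix X assume X: "X \<in> Theta P \<inter> Theta Q"
      have XP: "X \<in> Theta P" and XQ: "X \<in> Theta Q" using X by auto
      obtain t where t: "t \<in> P \<inter> Q" "X = hook t"
        using inter_main[OF A B small XP XQ] by blast
      then have "t \<in> span {v}" using PQv by auto
      then obtain c where "t = c *\<^sub>R v" by (auto simp: span_singleton)
      then have "X = c *\<^sub>R hook v" using t(2) by (simp add: hook_scale)
      then show "X \<in> span {hook v}" by (simp add: span_base span_scale)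
    qed
    show "span {hook v} \<subseteq> Theta P \<inter> Theta Q"
      using assms(4) A.hook_Theta B.hook_Theta A.Theta_subspace B.Theta_subspace
      by (intro span_minimal) (auto intro: subspace_inter)
  qed
  define z where "z = A.z"
  have z: "z \<bullet> z = 1" "v \<bullet> z = 0"
    using A.zz A.orth_inner[OF A.orth_z] assms(4) unfolding z_def by auto
  have hz: "(hook v *v z) \<bullet> cross7 v z = 1"
    by (simp add: hook_apply lagrange z vv)
  define f where "f X = ((X *v z) \<bullet> cross7 v z) *\<^sub>R J2" for X :: "real^7^7"
  have fh: "f (c *\<^sub>R hook v) = c *\<^sub>R J2" for c
    unfolding f_def by (simp add: scaleR_matrix_vector_assoc[symmetric] hz)
  have spanv: "span {hook v} = range (\<lambda>c. c *\<^sub>R hook v)" by (simp add: span_singleton)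
  have iso: "lie_isomorphic (span {hook v}) (so :: (real^2^2) set)"
    unfolding lie_isomorphic_def
  proof (intro exI conjI ballI)
    show "linear f"
      by (rule linearI) (simp_all add: f_def matrix_vector_mult_add_rdistrib inner_add_left
           scaleR_add_left scaleR_matrix_vector_assoc[symmetric])
    show "bij_betw f (span {hook v}) so"
      unfolding bij_betw_def spanv
    proof
      show "inj_on f (range (\<lambda>c. c *\<^sub>R hook v))"
      proof (rule inj_onI)
        fix X Y assume X: "X \<in> range (\<lambda>c. c *\<^sub>R hook v)" and Y: "Y \<in> range (\<lambda>c. c *\<^sub>R hook v)"
          and e: "f X = f Y"
        obtain a where a: "X = a *\<^sub>R hook v" using X by auto
        obtain b where b: "Y = b *\<^sub>R hook v" using Y by auto
        have "a *\<^sub>R J2 = b *\<^sub>R J2" using e unfolding a b fh .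
        then have "a = b" using J2_entries(3) by auto
        then show "X = Y" using a b by simp
      qed
      show "f ` range (\<lambda>c. c *\<^sub>R hook v) = so"
      proof
        show "f ` range (\<lambda>c. c *\<^sub>R hook v) \<subseteq> so" using fh so2_J2 by auto
        show "so \<subseteq> f ` range (\<lambda>c. c *\<^sub>R hook v)"
        proof
          fix A :: "real^2^2" assume "A \<in> so"
          then have "A = f ((A $ 2 $ 1) *\<^sub>R hook v)" using so2_surj[of A] fh[of "A $ 2 $ 1"] by simp
          then show "A \<in> f ` range (\<lambda>c. c *\<^sub>R hook v)" by blast
        qed
      qed
    qed
    fix X Y assume "X \<in> span {hook v}" "Y \<in> span {hook v}"
    then obtain a b where ab: "X = a *\<^sub>R hook v" "Y = b *\<^sub>R hook v" unfolding spanv by auto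
    show "f (bracket X Y) = bracket (f X) (f Y)"
      unfolding ab fh bracket_scale_same by (simp add: f_def)
  qed
  show ?thesis using eq iso by simp
qed

theorem theorem4p14:
  shows
  "(\<forall>P. associative P \<longrightarrow>
      lie_subalgebra (Theta P)
    \<and> lie_isomorphic (Theta P) (so :: (real^4^4) set)
    \<and> Lambda2 P \<inter> PsiS P = {0}
    \<and> (\<forall>X\<in>Lambda2 P. \<forall>Y\<in>PsiS P. form_inner X Y = 0)
    \<and> Theta P = setsum (Lambda2 P) (hookset P)
    \<and> Lambda2 P \<inter> hookset P = {0})
  \<and> (\<forall>P Q. associative P \<longrightarrow> associative Q \<longrightarrow> P \<noteq> Q \<longrightarrow>
      lie_subalgebra (Theta P \<inter> Theta Q)
    \<and> (P \<inter> Q = {0} \<longrightarrow> Theta P \<inter> Theta Q = {0})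
    \<and> (\<forall>v. dim (P \<inter> Q) = 1 \<longrightarrow> v \<in> P \<inter> Q \<longrightarrow> norm v = 1 \<longrightarrow>
          Theta P \<inter> Theta Q = span {hook v}
        \<and> lie_isomorphic (Theta P \<inter> Theta Q) (so :: (real^2^2) set)))"
  apply (rule conjI)
   apply (intro allI impI)
   apply (rule partA; assumption)
  apply (intro allI impI conjI)
     apply (rule partB1; assumption)
    apply (rule partB2; assumption)
   apply (rule partB3[THEN conjunct1]; assumption)
  apply (rule partB3[THEN conjunct2]; assumption)
  done

end
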